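(* Let $G$ be a graph of order $n \ge 3$. Suppose that for every vertex $v \in V(G)$ and for all $u \in N(v)$ we have $\deg_{\langle N(v)\rangle}(u) \ge \deg_G(v)/2$. Then $G$ is hamiltonian and $\{1,2\}$-extendable.
   Context: $N(v)$ denotes the open neighbourhood of $v$ and $\langle X\rangle$ the subgraph of $G$ induced by $X \subseteq V(G)$. A graph $G$ is $\{1,2\}$-extendable if for every non-hamiltonian cycle $C$ of $G$ there exists a cycle $C'$ of length $|C|+1$ or $|C|+2$ whose vertex set contains all vertices of $C$. *)

theory Defs
  imports Main
begin

definition simple_graph :: "'a set \<Rightarrow> ('a \<Rightarrow> 'a \<Rightarrow> bool) \<Rightarrow> bool" where
  "simple_graph V E \<longleftrightarrow> finite V \<and> (\<forall>u v. E u v \<longrightarrow> u \<in> V \<and> v \<in> V)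
     \<and> (\<forall>u v. E u v \<longrightarrow> E v u) \<and> (\<forall>u. \<not> E u u)"

definition connected_graph :: "'a set \<Rightarrow> ('a \<Rightarrow> 'a \<Rightarrow> bool) \<Rightarrow> bool" where
  "connected_graph V E \<longleftrightarrow> (\<forall>u\<in>V. \<forall>v\<in>V. (u, v) \<in> {(x, y). E x y}\<^sup>*)"

definition nbhd :: "'a set \<Rightarrow> ('a \<Rightarrow> 'a \<Rightarrow> bool) \<Rightarrow> 'a \<Rightarrow> 'a set" where
  "nbhd V E v = {u \<in> V. E v u}"

definition degree :: "'a set \<Rightarrow> ('a \<Rightarrow> 'a \<Rightarrow> bool) \<Rightarrow> 'a \<Rightarrow> nat" where
  "degree V E v = card (nbhd V E v)"

definition induced_degree :: "'a set \<Rightarrow> ('a \<Rightarrow> 'a \<Rightarrow> bool) \<Rightarrow> 'a set \<Rightarrow> 'a \<Rightarrow> nat" where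
  "induced_degree V E X u = card {w \<in> X. E u w}"

definition is_cycle :: "'a set \<Rightarrow> ('a \<Rightarrow> 'a \<Rightarrow> bool) \<Rightarrow> 'a list \<Rightarrow> bool" where
  "is_cycle V E cs \<longleftrightarrow> length cs \<ge> 3 \<and> distinct cs \<and> set cs \<subseteq> V
     \<and> (\<forall>i < length cs. E (cs ! i) (cs ! ((i + 1) mod length cs)))"

definition hamiltonian :: "'a set \<Rightarrow> ('a \<Rightarrow> 'a \<Rightarrow> bool) \<Rightarrow> bool" where
  "hamiltonian V E \<longleftrightarrow> (\<exists>cs. is_cycle V E cs \<and> set cs = V)"

definition extendable_12 :: "'a set \<Rightarrow> ('a \<Rightarrow> 'a \<Rightarrow> bool) \<Rightarrow> bool" where
  "extendable_12 V E \<longleftrightarrow> (\<forall>C. is_cycle V E C \<and> set C \<noteq> V \<longrightarrow>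
     (\<exists>C'. is_cycle V E C' \<and> (length C' = length C + 1 \<or> length C' = length C + 2)
           \<and> set C \<subseteq> set C'))"

end

theory Submission
  imports Defs
begin


fun walk :: "('a \<Rightarrow> 'a \<Rightarrow> bool) \<Rightarrow> 'a list \<Rightarrow> bool" where
  "walk E (a # b # xs) = (E a b \<and> walk E (b # xs))"
| "walk E _ = True"

lemma walk_Cons: "walk E (a # xs) = (walk E xs \<and> (xs \<noteq> [] \<longrightarrow> E a (hd xs)))"
  by (cases xs) auto

lemma walk_append:
  "walk E (xs @ ys) = (walk E xs \<and> walk E ys \<and> (xs \<noteq> [] \<longrightarrow> ys \<noteq> [] \<longrightarrow> E (last xs) (hd ys)))"
  by (induction xs) (auto simp: walk_Cons)

lemma walk_rev: "(\<And>u v. E u v \<Longrightarrow> E v u) \<Longrightarrow> walk E (rev xs) = walk E xs"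
  by (induction xs) (auto simp: walk_append walk_Cons last_rev)

lemma walk_nth: "walk E xs = (\<forall>i. Suc i < length xs \<longrightarrow> E (xs!i) (xs ! Suc i))"
proof (induction xs)
  case Nil show ?case by simp
next
  case (Cons a xs)
  show ?case
  proof
    assume w: "walk E (a#xs)"
    show "\<forall>i. Suc i < length (a#xs) \<longrightarrow> E ((a#xs)!i) ((a#xs)!Suc i)"
    proof (intro allI impI)
      fix i assume i: "Suc i < length (a#xs)"
      show "E ((a#xs)!i) ((a#xs)!Suc i)"
      proof (cases i)
        case 0 then show ?thesis using w i by (cases xs) auto
      next
        case (Suc j) then show ?thesis using w i Cons.IH by (simp add: walk_Cons)
      qed
    qed
  next
    assume H: "\<forall>i. Suc i < length (a#xs) \<longrightarrow> E ((a#xs)!i) ((a#xs)!Suc i)"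
    have "walk E xs" unfolding Cons.IH
    proof (intro allI impI)
      fix i assume "Suc i < length xs"
      then show "E (xs!i) (xs!Suc i)" using H[rule_format, of "Suc i"] by simp
    qed
    moreover have "xs \<noteq> [] \<longrightarrow> E a (hd xs)" using H[rule_format, of 0] by (cases xs) auto
    ultimately show "walk E (a#xs)" by (simp add: walk_Cons)
  qed
qed

lemma is_cycle_alt:
  "is_cycle V E cs \<longleftrightarrow> 3 \<le> length cs \<and> distinct cs \<and> set cs \<subseteq> V \<and> walk E cs \<and> E (last cs) (hd cs)"
proof
  assume H: "is_cycle V E cs"
  hence L: "3 \<le> length cs" and A: "\<forall>i<length cs. E (cs!i) (cs!((i+1) mod length cs))"
    by (auto simp: is_cycle_def)
  have "walk E cs" unfolding walk_nth
  proof (intro allI impI)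
    fix i assume "Suc i < length cs"
    with A[rule_format, of i] show "E (cs!i) (cs!Suc i)" by simp
  qed
  moreover have "E (last cs) (hd cs)"
  proof -
    have "length cs - 1 < length cs" using L by simp
    moreover have "Suc (length cs - 1) = length cs" using L by simp
    ultimately have "E (cs!(length cs - 1)) (cs!0)" using A by (metis Suc_eq_plus1 mod_self)
    moreover have ne: "cs \<noteq> []" using L by auto
    ultimately show ?thesis by (simp add: last_conv_nth[OF ne] hd_conv_nth[OF ne])
  qed
  ultimately show "3 \<le> length cs \<and> distinct cs \<and> set cs \<subseteq> V \<and> walk E cs \<and> E (last cs) (hd cs)"
    using H by (auto simp: is_cycle_def)
next
  assume H: "3 \<le> length cs \<and> distinct cs \<and> set cs \<subseteq> V \<and> walk E cs \<and> E (last cs) (hd cs)"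
  show "is_cycle V E cs" unfolding is_cycle_def
  proof (intro conjI allI impI)
    fix i assume i: "i < length cs"
    show "E (cs!i) (cs!((i+1) mod length cs))"
    proof (cases "Suc i < length cs")
      case True then show ?thesis using H by (simp add: walk_nth)
    next
      case False then have i1: "i = length cs - 1" using i by auto
      have i2: "(i+1) mod length cs = 0" proof -
        have "Suc i = length cs" using False i by simp
        then show ?thesis by simp
      qed
      have ne: "cs \<noteq> []" using H by auto
      have h1: "cs ! ((i+1) mod length cs) = hd cs" using i2 ne by (simp add: hd_conv_nth)
      have h2: "cs ! i = last cs" using i1 ne by (simp add: last_conv_nth)
      show ?thesis using H unfolding h1 h2 by simp
    qed
  qed (use H in auto)
qed

definition cs_succ :: "'a list \<Rightarrow> 'a \<Rightarrow> 'a \<Rightarrow> bool" where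
  "cs_succ C a b \<longleftrightarrow> (\<exists>i<length C. C!i = a \<and> C!(Suc i mod length C) = b)"

lemma cs_succ_edge: "is_cycle V E C \<Longrightarrow> cs_succ C a b \<Longrightarrow> E a b"
  unfolding is_cycle_def cs_succ_def by auto

lemma cs_succ_set: "cs_succ C a b \<Longrightarrow> a \<in> set C \<and> b \<in> set C"
  unfolding cs_succ_def by (metis gr_implies_not0 mod_less_divisor neq0_conv nth_mem)

lemma cs_succ_ex: "a \<in> set C \<Longrightarrow> \<exists>b. cs_succ C a b"
  unfolding cs_succ_def by (auto simp: in_set_conv_nth)

lemma cs_succ_fun: "distinct C \<Longrightarrow> cs_succ C a b \<Longrightarrow> cs_succ C a b' \<Longrightarrow> b = b'"
  unfolding cs_succ_def by (metis nth_eq_iff_index_eq)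

lemma suc_mod_inj: "Suc i mod n = Suc j mod n \<Longrightarrow> i < n \<Longrightarrow> j < n \<Longrightarrow> i = j"
  by (auto simp: mod_Suc split: if_splits)

lemma cs_succ_inj: "distinct C \<Longrightarrow> cs_succ C a b \<Longrightarrow> cs_succ C a' b \<Longrightarrow> a = a'"
proof -
  assume d: "distinct C" and "cs_succ C a b" "cs_succ C a' b"
  then obtain i j where ij: "i < length C" "j < length C" "C!i = a" "C!j = a'"
    "C!(Suc i mod length C) = b" "C!(Suc j mod length C) = b"
    unfolding cs_succ_def by blast
  then have "Suc i mod length C = Suc j mod length C"
    using d nth_eq_iff_index_eq by (metis mod_less_divisor gr_implies_not0 neq0_conv)
  then have "i = j" using ij suc_mod_inj by blast
  then show "a = a'" using ij by simp
qed

lemma cs_succ_rotate: "cs_succ (rotate k C) a b \<Longrightarrow> cs_succ C a b"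
proof -
  assume "cs_succ (rotate k C) a b"
  then obtain i where i: "i < length C" "rotate k C ! i = a" "rotate k C ! (Suc i mod length C) = b"
    unfolding cs_succ_def by auto
  have n: "length C > 0" using i by linarith
  have a: "C ! ((k + i) mod length C) = a" using i nth_rotate by metis
  have "rotate k C ! (Suc i mod length C) = C ! ((k + Suc i mod length C) mod length C)"
    by (rule nth_rotate) (use n in simp)
  also have "(k + Suc i mod length C) mod length C = Suc ((k + i) mod length C) mod length C"
    by (simp add: mod_add_right_eq mod_Suc_eq)
  finally have b: "C ! (Suc ((k + i) mod length C) mod length C) = b" using i by simp
  show ?thesis unfolding cs_succ_def using a b n by (intro exI[of _ "(k + i) mod length C"]) auto
qed

lemma cs_succ_mid: "cs_succ (p @ a # b # q) a b"
  unfolding cs_succ_def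
  by (intro exI[of _ "length p"]) (auto simp: nth_append)

lemma cs_succ_last: "cs_succ (b # m @ [a]) a b"
  unfolding cs_succ_def
  by (intro exI[of _ "Suc (length m)"]) (auto simp: nth_append)

lemma cycle_rot: "is_cycle V E (p @ q) \<Longrightarrow> is_cycle V E (q @ p)"
  unfolding is_cycle_alt
  by (cases "p = []"; cases "q = []") (auto simp: walk_append)

lemma rot_to_front:
  assumes "is_cycle V E C" "a \<in> set C"
  shows "\<exists>q. is_cycle V E (a # q) \<and> set (a # q) = set C \<and> length (a # q) = length C
           \<and> (\<forall>x y. cs_succ (a # q) x y \<longrightarrow> cs_succ C x y)"
proof -
  obtain p q where C: "C = p @ a # q" using assms(2) split_list by metis
  have r: "rotate (length p) C = (a # q) @ p" using C rotate_append by metis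
  show ?thesis
    apply (rule exI[of _ "q @ p"])
    using cycle_rot[of V E p "a # q"] assms(1) C cs_succ_rotate[of "length p" C] r
    by auto
qed



lemma front_succ:
  assumes "is_cycle V E C" "a \<in> set C" "cs_succ C a s"
  obtains r where "is_cycle V E (a # s # r)" "set (a # s # r) = set C" "length (a # s # r) = length C"
proof -
  obtain q where q: "is_cycle V E (a # q)" "set (a # q) = set C" "length (a # q) = length C"
    "\<forall>x y. cs_succ (a # q) x y \<longrightarrow> cs_succ C x y"
    using rot_to_front[OF assms(1,2)] by blast
  have "q \<noteq> []" using q(1) by (auto simp: is_cycle_def)
  then obtain s' r where qr: "q = s' # r" by (cases q) auto
  have "cs_succ C a s'" using q(4) cs_succ_mid[of "[]" a s' r] qr by auto
  then have "s' = s" using cs_succ_fun assms(1,3) by (metis is_cycle_def)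
  then show ?thesis using that q qr by blast
qed

lemma ext_ins1:
  assumes C: "is_cycle V E C" and a: "a \<in> set C" and s: "cs_succ C a s"
    and y: "y \<in> V" "y \<notin> set C" and e: "E a y" "E y s"
  shows "\<exists>C'. is_cycle V E C' \<and> length C' = length C + 1 \<and> set C \<subseteq> set C'"
proof -
  obtain r where r: "is_cycle V E (a # s # r)" "set (a # s # r) = set C" "length (a # s # r) = length C"
    using front_succ[OF C a s] by blast
  have "is_cycle V E (a # y # s # r)"
    using r y e unfolding is_cycle_alt by (auto simp: walk_Cons)
  then show ?thesis using r by (intro exI[of _ "a # y # s # r"]) auto
qed

lemma ext_ins2:
  assumes C: "is_cycle V E C" and a: "a \<in> set C" and s: "cs_succ C a s"
    and y: "y \<in> V" "y \<notin> set C" and z: "z \<in> V" "z \<notin> set C" "z \<noteq> y"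
    and e: "E a y" "E y z" "E z s"
  shows "\<exists>C'. is_cycle V E C' \<and> length C' = length C + 2 \<and> set C \<subseteq> set C'"
proof -
  obtain r where r: "is_cycle V E (a # s # r)" "set (a # s # r) = set C" "length (a # s # r) = length C"
    using front_succ[OF C a s] by blast
  have "is_cycle V E (a # y # z # s # r)"
    using r y z e unfolding is_cycle_alt by (auto simp: walk_Cons)
  then show ?thesis using r by (intro exI[of _ "a # y # z # s # r"]) auto
qed

lemma ext_cross:
  assumes sym: "\<And>u v. E u v \<Longrightarrow> E v u"
    and C: "is_cycle V E C" and a: "a \<in> set C" and b: "b \<in> set C" and ab: "a \<noteq> b"
    and sa: "cs_succ C a s" and sb: "cs_succ C b t"
    and y: "y \<in> V" "y \<notin> set C" and e: "E y a" "E y b" "E s t"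
  shows "\<exists>C'. is_cycle V E C' \<and> length C' = length C + 1 \<and> set C \<subseteq> set C'"
proof -
  obtain q where q: "is_cycle V E (a # q)" "set (a # q) = set C" "length (a # q) = length C"
    "\<forall>x y. cs_succ (a # q) x y \<longrightarrow> cs_succ C x y"
    using rot_to_front[OF C a] by blast
  have "b \<in> set q" using b ab q(2) by auto
  then obtain P Q where PQ: "q = P @ b # Q" using split_list by metis
  have dC: "distinct C" using C by (simp add: is_cycle_def)
  have s_eq: "s = hd (P @ b # Q)"
  proof -
    obtain h t' where ht: "P @ b # Q = h # t'" by (cases "P @ b # Q") auto
    have "cs_succ C a h" using q(4) cs_succ_mid[of "[]" a h t'] PQ ht by auto
    then show ?thesis using cs_succ_fun[OF dC sa] ht by simp
  qed
  have t_eq: "t = hd (Q @ [a])"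
  proof (cases Q)
    case Nil
    have "cs_succ (a # P @ [b]) b a" using cs_succ_last[of a P b] by simp
    then have "cs_succ C b a" using q(4) PQ Nil by auto
    then show ?thesis using cs_succ_fun[OF dC sb] Nil by simp
  next
    case (Cons c Q')
    have "cs_succ ((a # P) @ b # c # Q') b c" by (rule cs_succ_mid)
    then have "cs_succ C b c" using q(4) PQ Cons by auto
    then show ?thesis using cs_succ_fun[OF dC sb] Cons by simp
  qed
  define C' where "C' = y # b # rev P @ Q @ [a]"
  have cyc0: "3 \<le> length (a # P @ b # Q)" "distinct (a # P @ b # Q)" "set (a # P @ b # Q) \<subseteq> V"
    "walk E (a # P @ b # Q)" "E (last (a # P @ b # Q)) (hd (a # P @ b # Q))"
    using q(1) PQ unfolding is_cycle_alt by auto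
  have w0: "walk E P" "P \<noteq> [] \<longrightarrow> E (last P) b" "walk E Q" "Q \<noteq> [] \<longrightarrow> E b (hd Q)"
    using cyc0(4) by (auto simp: walk_Cons walk_append)
  have cl: "E (last (b # Q)) a" using cyc0(5) by simp
  have w1: "walk E (Q @ [a])" using w0(3) cl by (cases "Q = []") (auto simp: walk_append)
  have w2: "walk E (b # rev P @ Q @ [a])"
  proof (cases "P = []")
    case True
    then have "s = b" using s_eq by simp
    then have "E b (hd (Q @ [a]))" using e(3) t_eq by simp
    then show ?thesis using w1 True by (simp add: walk_Cons)
  next
    case False
    have "s = hd P" using s_eq False by simp
    then have st: "E (hd P) (hd (Q @ [a]))" using e(3) t_eq by simp
    have "walk E (rev P)" using w0(1) walk_rev sym by blast
    then have "walk E (rev P @ Q @ [a])" using st w1 False by (simp add: walk_append last_rev)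
    moreover have "E b (hd (rev P @ Q @ [a]))" using w0(2) False sym by (simp add: hd_rev)
    ultimately show ?thesis by (simp add: walk_Cons)
  qed
  have "is_cycle V E C'" unfolding is_cycle_alt C'_def
    using cyc0(1-3) w2 y e(1) e(2) sym q(2) PQ by (auto simp: walk_Cons)
  moreover have "length C' = length C + 1" using q(3) PQ by (simp add: C'_def)
  moreover have "set C \<subseteq> set C'" using q(2) PQ by (auto simp: C'_def)
  ultimately show ?thesis by blast
qed



lemma double_count:
  assumes "finite A"
  shows "(\<Sum>b\<in>A. card {a\<in>A. P b a}) = (\<Sum>b\<in>A. card {a\<in>A. P a b})"
proof -
  have c: "\<And>Q. card {a\<in>A. Q a} = (\<Sum>a\<in>A. if Q a then 1 else 0)"
    using assms by (simp add: sum.inter_filter[symmetric])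
  show ?thesis unfolding c by (rule sum.swap)
qed

lemma extend:
  assumes G: "simple_graph V E" and conn: "connected_graph V E"
    and LD: "\<forall>v\<in>V. \<forall>u\<in>nbhd V E v. 2 * induced_degree V E (nbhd V E v) u \<ge> degree V E v"
    and C: "is_cycle V E C" and ne: "set C \<noteq> V"
  shows "\<exists>C'. is_cycle V E C' \<and> (length C' = length C + 1 \<or> length C' = length C + 2) \<and> set C \<subseteq> set C'"
proof (rule ccontr)
  assume NE: "\<not> ?thesis"
  have sym: "\<And>u v. E u v \<Longrightarrow> E v u" and irr: "\<And>u. \<not> E u u"
    and inV: "\<And>u v. E u v \<Longrightarrow> u \<in> V \<and> v \<in> V" and fin: "finite V"
    using G by (auto simp: simple_graph_def)
  have Cd: "distinct C" "set C \<subseteq> V" "3 \<le> length C" using C by (auto simp: is_cycle_def)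
  obtain x0 y where x0: "x0 \<in> set C" and y: "y \<notin> set C" "E x0 y"
  proof -
    obtain u where u: "u \<in> set C" using Cd by (cases C) auto
    obtain v where v: "v \<in> V" "v \<notin> set C" using ne Cd by auto
    have "(u,v) \<in> {(x,y). E x y}\<^sup>*" using conn u v Cd unfolding connected_graph_def by auto
    then have "\<exists>x\<in>set C. \<exists>y. y \<notin> set C \<and> E x y" using v(2) u
      by (induction rule: rtrancl_induct) auto
    then show ?thesis using that by blast
  qed
  have yV: "y \<in> V" using inV y(2) by blast
  have "\<forall>x\<in>set C. \<exists>b. cs_succ C x b"
  proof
    fix x assume "x \<in> set C" then show "\<exists>b. cs_succ C x b" by (rule cs_succ_ex)
  qed
  from bchoice[OF this] obtain f where f: "\<forall>x\<in>set C. cs_succ C x (f x)" by blast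
  have f': "cs_succ C x (f x)" if "x \<in> set C" for x using f that by (rule bspec)
  have fC: "f x \<in> set C" if "x \<in> set C" for x
    using cs_succ_set[OF f'[OF that]] by (rule conjunct2)
  have fE: "E x (f x)" if "x \<in> set C" for x
    by (rule cs_succ_edge[OF C f'[OF that]])
  have finj: "x = x'" if "x \<in> set C" "x' \<in> set C" "f x = f x'" for x x'
    using cs_succ_inj[OF Cd(1) f'[OF that(1)]] f'[OF that(2)] that(3) by simp
  define A where "A = {a \<in> set C. E y a}"
  have A0: "x0 \<in> A" using x0 y sym by (auto simp: A_def)
  have finA: "finite A" by (simp add: A_def)
  have E1: "\<And>a. a \<in> A \<Longrightarrow> \<not> E y (f a)"
  proof
    fix a assume a: "a \<in> A" and e: "E y (f a)"
    have "\<exists>C'. is_cycle V E C' \<and> length C' = length C + 1 \<and> set C \<subseteq> set C'"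
      using ext_ins1[OF C _ _ yV y(1), of a "f a"] a f' e sym by (auto simp: A_def)
    then show False using NE by blast
  qed
  have E2: "\<And>a b. a \<in> A \<Longrightarrow> b \<in> A \<Longrightarrow> a \<noteq> b \<Longrightarrow> \<not> E (f a) (f b)"
  proof
    fix a b assume a: "a \<in> A" and b: "b \<in> A" and ab: "a \<noteq> b" and e: "E (f a) (f b)"
    have "\<exists>C'. is_cycle V E C' \<and> length C' = length C + 1 \<and> set C \<subseteq> set C'"
      using ext_cross[OF sym C _ _ ab _ _ yV y(1), of "f a" "f b"] a b f' e by (auto simp: A_def)
    then show False using NE by blast
  qed
  have E3: "\<And>a z. a \<in> A \<Longrightarrow> z \<notin> set C \<Longrightarrow> z \<noteq> y \<Longrightarrow> E y z \<Longrightarrow> \<not> E z (f a)"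
  proof
    fix a z assume a: "a \<in> A" and z: "z \<notin> set C" "z \<noteq> y" "E y z" and e: "E z (f a)"
    have zV: "z \<in> V" using inV z(3) by blast
    have "\<exists>C'. is_cycle V E C' \<and> length C' = length C + 2 \<and> set C \<subseteq> set C'"
      using ext_ins2[OF C _ _ yV y(1) zV z(1) z(2), of a "f a"] a f' e z(3) sym by (auto simp: A_def)
    then show False using NE by blast
  qed
  have key: "card {a\<in>A. E b a \<and> E (f a) b} + 2 \<le> card {a\<in>A. E b a \<and> E (f b) a}" if b: "b \<in> A" for b
  proof -
    have bC: "b \<in> set C" and yb: "E y b" using b by (auto simp: A_def)
    have bV: "b \<in> V" using bC Cd by auto
    define X where "X = nbhd V E b"
    define Ny where "Ny = {w\<in>X. E y w}"
    define Nf where "Nf = {w\<in>X. E (f b) w}"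
    define Nei where "Nei = X - (Ny \<union> Nf)"
    define Ext where "Ext = {a\<in>A. E b a \<and> E (f a) b}"
    have finX: "finite X" using fin by (simp add: X_def nbhd_def)
    have yX: "y \<in> X" using yV yb sym by (simp add: X_def nbhd_def)
    have fbX: "f b \<in> X" using fE[OF bC] fC[OF bC] Cd by (auto simp: X_def nbhd_def)
    have d1: "card X \<le> 2 * card Ny"
      using LD bV yX unfolding degree_def induced_degree_def Ny_def X_def by auto
    have d2: "card X \<le> 2 * card Nf"
      using LD bV fbX unfolding degree_def induced_degree_def Nf_def X_def by auto
    have both: "Ny \<inter> Nf = {a\<in>A. E b a \<and> E (f b) a}"
    proof
      show "Ny \<inter> Nf \<subseteq> {a\<in>A. E b a \<and> E (f b) a}"
      proof
        fix w assume w: "w \<in> Ny \<inter> Nf"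
        then have wX: "E b w" "E y w" "E (f b) w" by (auto simp: Ny_def Nf_def X_def nbhd_def)
        have "w \<in> set C"
        proof (rule ccontr)
          assume "w \<notin> set C"
          moreover have "w \<noteq> y" using wX irr by auto
          ultimately have "\<not> E w (f b)" using E3[OF b] wX by blast
          then show False using wX sym by blast
        qed
        then show "w \<in> {a\<in>A. E b a \<and> E (f b) a}" using wX by (auto simp: A_def)
      qed
    next
      show "{a\<in>A. E b a \<and> E (f b) a} \<subseteq> Ny \<inter> Nf"
        using inV sym by (auto simp: A_def Ny_def Nf_def X_def nbhd_def)
    qed
    have c1: "card Nei \<le> card (Ny \<inter> Nf)"
    proof -
      have fNy: "finite Ny" "finite Nf" using finX by (auto simp: Ny_def Nf_def)
      have sub: "Ny \<union> Nf \<subseteq> X" by (auto simp: Ny_def Nf_def)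
      have "card Nei = card X - card (Ny \<union> Nf)"
        unfolding Nei_def by (rule card_Diff_subset[OF finite_subset[OF sub finX] sub])
      moreover have "card Ny + card Nf = card (Ny \<union> Nf) + card (Ny \<inter> Nf)"
        using fNy card_Un_Int by blast
      moreover have "card (Ny \<union> Nf) \<le> card X" using sub finX card_mono by blast
      ultimately show ?thesis using d1 d2 by linarith
    qed
    have finExt: "finite Ext" using finA by (simp add: Ext_def)
    have ExtC: "Ext \<subseteq> set C" by (auto simp: Ext_def A_def)
    have sub2: "insert y (insert (f b) (f ` Ext)) \<subseteq> Nei"
    proof -
      have "y \<in> Nei" using yX irr E1[OF b] sym by (auto simp: Nei_def Ny_def Nf_def)
      moreover have "f b \<in> Nei" using fbX irr E1[OF b] sym by (auto simp: Nei_def Ny_def Nf_def)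
      moreover have "f a \<in> Nei" if a: "a \<in> Ext" for a
      proof -
        have aA: "a \<in> A" and ba: "E b a" and fab: "E (f a) b" using a by (auto simp: Ext_def)
        have "a \<noteq> b" using ba irr by auto
        then have "\<not> E (f b) (f a)" using E2[OF b aA] by blast
        moreover have "\<not> E y (f a)" using E1[OF aA] .
        moreover have "f a \<in> X" using fab sym inV by (auto simp: X_def nbhd_def)
        ultimately show ?thesis by (auto simp: Nei_def Ny_def Nf_def)
      qed
      ultimately show ?thesis by auto
    qed
    have c2: "card (insert y (insert (f b) (f ` Ext))) = card Ext + 2"
    proof -
      have inj: "inj_on f Ext" using finj ExtC by (meson inj_onI subsetD)
      have "f b \<notin> f ` Ext"
      proof
        assume "f b \<in> f ` Ext"
        then obtain a where a: "a \<in> Ext" "f b = f a" by auto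
        then have "a = b" using finj bC ExtC by blast
        then show False using a(1) irr by (auto simp: Ext_def)
      qed
      moreover have "y \<notin> insert (f b) (f ` Ext)" using y(1) fC bC ExtC by auto
      moreover have "card (f ` Ext) = card Ext" using inj card_image by blast
      ultimately show ?thesis using finExt by simp
    qed
    have "card Ext + 2 \<le> card Nei"
      using c2 sub2 card_mono[of Nei] finX by (metis Nei_def finite_Diff)
    then show ?thesis using c1 both by (simp add: Ext_def)
  qed
  define S where "S b = card {a\<in>A. E b a \<and> E (f a) b}" for b
  define T where "T b = card {a\<in>A. E b a \<and> E (f b) a}" for b
  have s1: "(\<Sum>b\<in>A. S b + 2) \<le> (\<Sum>b\<in>A. T b)"
    by (rule sum_mono) (use key in \<open>simp add: S_def T_def\<close>)
  have s2: "(\<Sum>b\<in>A. T b) = (\<Sum>b\<in>A. card {a\<in>A. E a b \<and> E (f a) b})"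
    unfolding T_def using double_count[OF finA, of "\<lambda>b a. E b a \<and> E (f b) a"] by simp
  have s3: "\<And>b. {a\<in>A. E a b \<and> E (f a) b} = {a\<in>A. E b a \<and> E (f a) b}" using sym by blast
  have s4: "(\<Sum>b\<in>A. T b) = (\<Sum>b\<in>A. S b)" unfolding s2 s3 S_def ..
  have s5: "(\<Sum>b\<in>A. S b + 2) = (\<Sum>b\<in>A. S b) + 2 * card A" by (simp only: sum.distrib sum_constant) simp
  have "card A > 0" using A0 finA card_gt_0_iff by blast
  then show False using s1 s4 s5 by linarith
qed



theorem mainTheorem2:
  fixes V :: "'a set" and E :: "'a \<Rightarrow> 'a \<Rightarrow> bool"
  assumes "simple_graph V E"
    and "connected_graph V E"
    and "card V \<ge> 3"
    and "\<forall>v\<in>V. \<forall>u\<in>nbhd V E v.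
           2 * induced_degree V E (nbhd V E v) u \<ge> degree V E v"
  shows "hamiltonian V E \<and> extendable_12 V E"
proof -
  have sym: "\<And>u v. E u v \<Longrightarrow> E v u" and irr: "\<And>u. \<not> E u u"
    and inV: "\<And>u v. E u v \<Longrightarrow> u \<in> V \<and> v \<in> V" and fin: "finite V"
    using assms(1) by (auto simp: simple_graph_def)
  have ext: "extendable_12 V E" unfolding extendable_12_def using extend[OF assms(1,2,4)] by blast
  obtain u v where uv: "u \<in> V" "v \<in> V" "u \<noteq> v"
  proof -
    have "\<not> (\<forall>x\<in>V. \<forall>y\<in>V. x = y)" using card_le_Suc0_iff_eq[OF fin] assms(3) by auto
    then show ?thesis using that by blast
  qed
  have "(u,v) \<in> {(x,y). E x y}\<^sup>*" using assms(2) uv unfolding connected_graph_def by auto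
  then obtain w where uw: "E u w" using uv(3) by (metis (mono_tags, lifting) case_prodD converse_rtranclE mem_Collect_eq)
  have wN: "w \<in> nbhd V E u" using uw inV by (simp add: nbhd_def)
  have uV: "u \<in> V" using uw inV by blast
  have "finite (nbhd V E u)" using fin by (simp add: nbhd_def)
  then have "card (nbhd V E u) \<ge> 1" using wN by (metis One_nat_def Suc_leI card_gt_0_iff empty_iff)
  then have "2 * card {t\<in>nbhd V E u. E w t} \<ge> 1"
    using assms(4) uV wN unfolding degree_def induced_degree_def by fastforce
  then have "{t\<in>nbhd V E u. E w t} \<noteq> {}" by (metis card.empty mult_0_right not_one_le_zero)
  then obtain t where t: "t \<in> nbhd V E u" "E w t" by blast
  have ut: "E u t" using t by (simp add: nbhd_def)
  have tri: "is_cycle V E [u, w, t]"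
    unfolding is_cycle_alt using uw ut t(2) irr inV sym by (auto simp: walk_Cons)
  have bound: "length C < card V + 1" if "is_cycle V E C" for C
  proof -
    have "distinct C" "set C \<subseteq> V" using that by (auto simp: is_cycle_def)
    then have "length C \<le> card V" using fin by (metis card_mono distinct_card)
    then show ?thesis by simp
  qed
  obtain C where C: "is_cycle V E C" and mx: "\<And>C'. is_cycle V E C' \<Longrightarrow> length C' \<le> length C"
    using Lattices_Big.ex_has_greatest_nat[of "is_cycle V E" "[u,w,t]" length "card V + 1"] tri bound
    by blast
  have "set C = V"
  proof (rule ccontr)
    assume "set C \<noteq> V"
    then obtain C' where "is_cycle V E C'" "length C' = length C + 1 \<or> length C' = length C + 2"
      using extend[OF assms(1,2,4) C] by blast
    then show False using mx by fastforce
  qed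
  then have "hamiltonian V E" using C by (auto simp: hamiltonian_def)
  then show ?thesis using ext by blast
qed

end
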